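(* Let $T\in\mathsf{S}^3(V^+)$ be positive (all coordinates strictly positive). Let $u\in V$ with $\|u\|=1$ satisfy $\langle T,u^{\otimes3}\rangle=\rho=\|T\|_\sigma$, and let $$\sigma_2=\min\{|\langle T,u\odot v\odot v\rangle|:\ \langle u,v\rangle=0,\ \|v\|=1\}.$$ If $\sigma_2\ge\rho/2$, then $T$ has a unique best nonnegative symmetric rank-one approximation.
   Context: $V$ is a real vector space of dimension $n$ with a fixed basis, taken orthonormal for the inner product $\langle\cdot,\cdot\rangle$; $V^+$ is the cone of vectors with nonnegative coordinates. $\mathsf{S}^3(V)$ is the space of symmetric 3-tensors and $\mathsf{S}^3(V^+)=\mathsf{S}^3(V)\cap(V^{\otimes3})^+$ the symmetric tensors with nonnegative coordinates. $u\odot v\odot w=\frac16\sum_{\tau}$ (sum of the six tensor products of $u,v,w$ in all orders). The inner product on tensors is the coordinate one and $\|\cdot\|$ the corresponding norm. $\|T\|_\sigma=\max\{|\langle T,u_1\otimes u_2\otimes u_3\rangle|:\|u_i\|=1\}$. A best nonnegative symmetric rank-one approximation of $T$ is a minimizer of $\|T-\lambda x^{\otimes3}\|$ over $\lambda\ge0$, $x\in V^+$ (uniqueness refers to the tensor $\lambda x^{\otimes 3}$). *)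

theory Defs
  imports "HOL-Analysis.Analysis"
begin

text \<open>V = real^'n (coordinates orthonormal), 3-tensors are functions 'n => 'n => 'n => real.\<close>

type_synonym 'n tensor3 = "'n \<Rightarrow> 'n \<Rightarrow> 'n \<Rightarrow> real"

definition tprod3 :: "real^'n \<Rightarrow> real^'n \<Rightarrow> real^'n \<Rightarrow> 'n tensor3" where
  "tprod3 u v w = (\<lambda>i j k. u$i * v$j * w$k)"

definition tpow3 :: "real^'n \<Rightarrow> 'n tensor3" where
  "tpow3 x = tprod3 x x x"

definition sym_prod3 :: "real^'n \<Rightarrow> real^'n \<Rightarrow> real^'n \<Rightarrow> 'n tensor3" where
  "sym_prod3 u v w = (\<lambda>i j k. (tprod3 u v w i j k + tprod3 u w v i j k + tprod3 v u w i j k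
      + tprod3 v w u i j k + tprod3 w u v i j k + tprod3 w v u i j k) / 6)"

definition tinner :: "'n::finite tensor3 \<Rightarrow> 'n tensor3 \<Rightarrow> real" where
  "tinner S T = (\<Sum>i\<in>UNIV. \<Sum>j\<in>UNIV. \<Sum>k\<in>UNIV. S i j k * T i j k)"

definition tnorm :: "'n::finite tensor3 \<Rightarrow> real" where
  "tnorm T = sqrt (tinner T T)"

definition symmetric3 :: "'n tensor3 \<Rightarrow> bool" where
  "symmetric3 T \<longleftrightarrow> (\<forall>i j k. T i j k = T j i k \<and> T i j k = T i k j)"

definition spectral_norm3 :: "'n::finite tensor3 \<Rightarrow> real" where
  "spectral_norm3 T = Sup {\<bar>tinner T (tprod3 u1 u2 u3)\<bar> | u1 u2 u3.
      norm u1 = 1 \<and> norm u2 = 1 \<and> norm u3 = 1}"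

definition nonneg_vec :: "real^'n \<Rightarrow> bool" where
  "nonneg_vec x \<longleftrightarrow> (\<forall>i. x$i \<ge> 0)"

definition best_nonneg_sym_rank1 :: "'n::finite tensor3 \<Rightarrow> 'n tensor3 \<Rightarrow> bool" where
  "best_nonneg_sym_rank1 T S \<longleftrightarrow>
     (\<exists>c x. c \<ge> 0 \<and> nonneg_vec x \<and> S = (\<lambda>i j k. c * tpow3 x i j k)) \<and>
     (\<forall>c' x'. c' \<ge> 0 \<and> nonneg_vec x' \<longrightarrow>
        tnorm (\<lambda>i j k. T i j k - S i j k) \<le> tnorm (\<lambda>i j k. T i j k - c' * tpow3 x' i j k))"

end

theory Submission
  imports Defs
begin


definition tri :: "'n::finite tensor3 \<Rightarrow> real^'n \<Rightarrow> real^'n \<Rightarrow> real^'n \<Rightarrow> real" where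
  "tri T x y z = (\<Sum>i\<in>UNIV. \<Sum>j\<in>UNIV. \<Sum>k\<in>UNIV. T i j k * (x$i * y$j * z$k))"

lemma tinner_tprod3: "tinner T (tprod3 x y z) = tri T x y z"
  by (simp add: tinner_def tprod3_def tri_def)

lemma tinner_tpow3: "tinner T (tpow3 x) = tri T x x x"
  by (simp add: tpow3_def tinner_tprod3)

lemma tri_add1: "tri T (x + x') y z = tri T x y z + tri T x' y z"
  by (simp add: tri_def algebra_simps sum.distrib)
lemma tri_add2: "tri T x (y + y') z = tri T x y z + tri T x y' z"
  by (simp add: tri_def algebra_simps sum.distrib)
lemma tri_add3: "tri T x y (z + z') = tri T x y z + tri T x y z'"
  by (simp add: tri_def algebra_simps sum.distrib)
lemma tri_scale1: "tri T (c *\<^sub>R x) y z = c * tri T x y z"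
  by (simp add: tri_def algebra_simps sum_distrib_left)
lemma tri_scale2: "tri T x (c *\<^sub>R y) z = c * tri T x y z"
  by (simp add: tri_def algebra_simps sum_distrib_left)
lemma tri_scale3: "tri T x y (c *\<^sub>R z) = c * tri T x y z"
  by (simp add: tri_def algebra_simps sum_distrib_left)

lemma tri_swap12: assumes "symmetric3 T" shows "tri T x y z = tri T y x z"
proof -
  have "tri T x y z = (\<Sum>j\<in>UNIV. \<Sum>i\<in>UNIV. \<Sum>k\<in>UNIV. T i j k * (x$i * y$j * z$k))"
    unfolding tri_def by (rule sum.swap)
  also have "\<dots> = tri T y x z" unfolding tri_def
    using assms unfolding symmetric3_def by (intro sum.cong refl) (metis mult.commute mult.left_commute)
  finally show ?thesis .
qed

lemma tri_swap23: assumes "symmetric3 T" shows "tri T x y z = tri T x z y"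
proof -
  have "tri T x y z = (\<Sum>i\<in>UNIV. \<Sum>k\<in>UNIV. \<Sum>j\<in>UNIV. T i j k * (x$i * y$j * z$k))"
    unfolding tri_def by (intro sum.cong refl sum.swap)
  also have "\<dots> = tri T x z y" unfolding tri_def
    using assms unfolding symmetric3_def by (intro sum.cong refl) (metis mult.commute mult.left_commute)
  finally show ?thesis .
qed

lemma tinner_sym: assumes "symmetric3 T" shows "tinner T (sym_prod3 u v v) = tri T u v v"
proof -
  have "6 * tinner T (sym_prod3 u v v) = (\<Sum>i\<in>UNIV. \<Sum>j\<in>UNIV. \<Sum>k\<in>UNIV. 6 * (T i j k * sym_prod3 u v v i j k))"
    by (simp add: tinner_def sum_distrib_left)
  also have "\<dots> = (\<Sum>i\<in>UNIV. \<Sum>j\<in>UNIV. \<Sum>k\<in>UNIV.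
      T i j k * (u$i * v$j * v$k) + T i j k * (u$i * v$j * v$k) + T i j k * (v$i * u$j * v$k)
      + T i j k * (v$i * v$j * u$k) + T i j k * (v$i * u$j * v$k) + T i j k * (v$i * v$j * u$k))"
    by (intro sum.cong refl) (simp add: sym_prod3_def tprod3_def algebra_simps)
  also have "\<dots> = tri T u v v + tri T u v v + tri T v u v + tri T v v u + tri T v u v + tri T v v u"
    by (simp only: tri_def sum.distrib)
  also have "\<dots> = 6 * tri T u v v" using tri_swap12[OF assms, of v u v] tri_swap23[OF assms, of v u v] by simp
  finally show ?thesis by simp
qed

lemma tri_expand: assumes "symmetric3 T"
  shows "tri T (p *\<^sub>R u + q *\<^sub>R v) (p *\<^sub>R u + q *\<^sub>R v) (p *\<^sub>R u + q *\<^sub>R v)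
    = p^3 * tri T u u u + 3 * p^2 * q * tri T u u v + 3 * p * q^2 * tri T u v v + q^3 * tri T v v v"
  using tri_swap12[OF assms, of v u u] tri_swap23[OF assms, of u v u]
   tri_swap12[OF assms, of v u v] tri_swap23[OF assms, of v v u]
  by (simp add: tri_add1 tri_add2 tri_add3 tri_scale1 tri_scale2 tri_scale3 algebra_simps power2_eq_square power3_eq_cube)


lemma tri_hom: "tri T (r *\<^sub>R x) (r *\<^sub>R x) (r *\<^sub>R x) = r^3 * tri T x x x"
  by (simp add: tri_scale1 tri_scale2 tri_scale3 power3_eq_cube)

lemma norm_sq_sum: "(norm (x::real^'n))^2 = (\<Sum>i\<in>UNIV. x$i * x$i)"
  by (simp add: power2_norm_eq_inner inner_vec_def)

lemma cube_sum: "(\<Sum>i\<in>UNIV. \<Sum>j\<in>UNIV. \<Sum>k\<in>UNIV. (a i * a j * a k :: real)) = (\<Sum>i\<in>UNIV. a i)^3"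
proof -
  have "(\<Sum>i\<in>UNIV. a i)^3 = (\<Sum>i\<in>UNIV. a i) * ((\<Sum>j\<in>UNIV. a j) * (\<Sum>k\<in>UNIV. a k))"
    by (simp add: power3_eq_cube)
  also have "\<dots> = (\<Sum>i\<in>UNIV. a i * (\<Sum>j\<in>UNIV. a j * (\<Sum>k\<in>UNIV. a k)))"
    by (simp only: sum_distrib_right)
  also have "\<dots> = (\<Sum>i\<in>UNIV. \<Sum>j\<in>UNIV. \<Sum>k\<in>UNIV. a i * a j * a k)"
    by (simp only: sum_distrib_left mult.assoc)
  finally show ?thesis by simp
qed

lemma tinner_diff: "tinner (\<lambda>i j k. T i j k - c * tpow3 x i j k) (\<lambda>i j k. T i j k - c * tpow3 x i j k)
   = tinner T T - 2 * c * tri T x x x + c^2 * (norm x)^6"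
proof -
  have "tinner (\<lambda>i j k. T i j k - c * tpow3 x i j k) (\<lambda>i j k. T i j k - c * tpow3 x i j k)
    = (\<Sum>i\<in>UNIV. \<Sum>j\<in>UNIV. \<Sum>k\<in>UNIV. T i j k * T i j k - 2 * c * (T i j k * (x$i * x$j * x$k))
        + c^2 * ((x$i * x$i) * (x$j * x$j) * (x$k * x$k)))"
    unfolding tinner_def tpow3_def tprod3_def
    by (intro sum.cong refl) (simp add: algebra_simps power2_eq_square)
  also have "\<dots> = tinner T T - 2 * c * tri T x x x + c^2 * (\<Sum>i\<in>UNIV. \<Sum>j\<in>UNIV. \<Sum>k\<in>UNIV. (x$i * x$i) * (x$j * x$j) * (x$k * x$k))"
    by (simp add: tinner_def tri_def sum.distrib sum_subtractf sum_distrib_left)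
  also have "\<dots> = tinner T T - 2 * c * tri T x x x + c^2 * (norm x)^6"
  proof -
    have "norm x ^ 6 = ((norm x)^2)^3" by (simp flip: power_mult)
    then have "norm x ^ 6 = (\<Sum>i\<in>UNIV. x$i * x$i)^3" using norm_sq_sum[of x] by simp
    then show ?thesis using cube_sum[of "\<lambda>i. x$i * x$i"] by simp
  qed
  finally show ?thesis .
qed

lemma tri_bound:
  assumes "norm a \<le> 1" "norm b \<le> 1" "norm c \<le> 1"
  shows "\<bar>tri T a b c\<bar> \<le> (\<Sum>i\<in>UNIV. \<Sum>j\<in>UNIV. \<Sum>k\<in>UNIV. \<bar>T i j k\<bar>)"
proof -
  have "\<bar>tri T a b c\<bar> \<le> (\<Sum>i\<in>UNIV. \<Sum>j\<in>UNIV. \<Sum>k\<in>UNIV. \<bar>T i j k * (a$i * b$j * c$k)\<bar>)"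
    unfolding tri_def by (rule order_trans[OF sum_abs] sum_mono order_trans[OF sum_abs] sum_mono sum_abs)+
  also have "\<dots> \<le> (\<Sum>i\<in>UNIV. \<Sum>j\<in>UNIV. \<Sum>k\<in>UNIV. \<bar>T i j k\<bar>)"
  proof (intro sum_mono)
    fix i j k
    have "\<bar>a$i\<bar> \<le> 1" "\<bar>b$j\<bar> \<le> 1" "\<bar>c$k\<bar> \<le> 1"
      using assms component_le_norm_cart[of a i] component_le_norm_cart[of b j] component_le_norm_cart[of c k] by auto
    then have "\<bar>a$i * b$j * c$k\<bar> \<le> 1" by (simp add: abs_mult mult_le_one)
    then show "\<bar>T i j k * (a$i * b$j * c$k)\<bar> \<le> \<bar>T i j k\<bar>"
      by (simp add: abs_mult mult_left_le)
  qed
  finally show ?thesis .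
qed

lemma spectral_bound:
  assumes "norm y = 1"
  shows "\<bar>tri T y y y\<bar> \<le> spectral_norm3 T"
  unfolding spectral_norm3_def
proof (rule cSup_upper)
  show "\<bar>tri T y y y\<bar> \<in> {\<bar>tinner T (tprod3 u1 u2 u3)\<bar> | u1 u2 u3. norm u1 = 1 \<and> norm u2 = 1 \<and> norm u3 = 1}"
    using assms by (auto simp: tinner_tprod3)
  show "bdd_above {\<bar>tinner T (tprod3 u1 u2 u3)\<bar> | u1 u2 u3. norm u1 = 1 \<and> norm u2 = 1 \<and> norm u3 = 1}"
    by (rule bdd_aboveI[where M="\<Sum>i\<in>UNIV. \<Sum>j\<in>UNIV. \<Sum>k\<in>UNIV. \<bar>T i j k\<bar>"])
       (auto simp: tinner_tprod3 intro!: tri_bound)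
qed


lemma norm_comb_sq:
  fixes u v :: "real^'n"
  assumes "norm u = 1" "norm v = 1" "inner u v = 0"
  shows "(norm (p *\<^sub>R u + q *\<^sub>R v))^2 = p^2 + q^2"
proof -
  have "inner u u = 1" "inner v v = 1" using assms by (simp_all add: power2_norm_eq_inner[symmetric])
  then show ?thesis using assms(3)
    by (simp add: power2_norm_eq_inner inner_add_left inner_add_right inner_commute[of v u]) (simp add: algebra_simps power2_eq_square)
qed

lemma param_ident:
  fixes t \<rho> d a b :: real
  shows "(1+t^2)^3 * (\<rho>*((1-t^2)/(1+t^2))^3 + 3*d*((1-t^2)/(1+t^2))^2*(2*t/(1+t^2))
      + 3*a*((1-t^2)/(1+t^2))*(2*t/(1+t^2))^2 + b*(2*t/(1+t^2))^3 - \<rho>)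
    = t * (6*d*(1-t^2)^2 + 12*a*t*(1-t^2) + 8*b*t^2 - \<rho>*(6*t + 2*t^5))"
proof -
  define D where "D = 1 + t^2"
  define p where "p = (1-t^2)/D"
  define q where "q = 2*t/D"
  have D0: "0 < D" unfolding D_def by (simp add: add_pos_nonneg)
  have hp: "D * p = 1 - t^2" unfolding p_def using D0 by simp
  have hq: "D * q = 2 * t" unfolding q_def using D0 by simp
  have "D^3 * (\<rho>*p^3 + 3*d*p^2*q + 3*a*p*q^2 + b*q^3 - \<rho>)
     = \<rho>*(D*p)^3 + 3*d*(D*p)^2*(D*q) + 3*a*(D*p)*(D*q)^2 + b*(D*q)^3 - \<rho> * D^3"
    by algebra
  also have "\<dots> = \<rho>*(1-t^2)^3 + 3*d*(1-t^2)^2*(2*t) + 3*a*(1-t^2)*(2*t)^2 + b*(2*t)^3 - \<rho> * D^3"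
    by (simp only: hp hq)
  also have "\<dots> = t * (6*d*(1-t^2)^2 + 12*a*t*(1-t^2) + 8*b*t^2 - \<rho>*(6*t + 2*t^5))"
    unfolding D_def by algebra
  finally show ?thesis unfolding D_def p_def q_def .
qed

lemma param_circle:
  fixes t :: real
  shows "((1-t^2)/(1+t^2))^2 + (2*t/(1+t^2))^2 = 1"
proof -
  define D where "D = 1 + t^2"
  define p where "p = (1-t^2)/D"
  define q where "q = 2*t/D"
  have D0: "0 < D" unfolding D_def by (simp add: add_pos_nonneg)
  have hp: "D * p = 1 - t^2" unfolding p_def using D0 by simp
  have hq: "D * q = 2 * t" unfolding q_def using D0 by simp
  have "D^2 * (p^2 + q^2) = (D*p)^2 + (D*q)^2" by algebra
  also have "\<dots> = (1-t^2)^2 + (2*t)^2" by (simp only: hp hq)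
  also have "\<dots> = D^2" unfolding D_def by algebra
  finally have "D^2 * (p^2 + q^2) = D^2 * 1" by simp
  then have "p^2 + q^2 = 1" using D0 by simp
  then show ?thesis unfolding D_def p_def q_def .
qed


lemma zero_by_sides:
  fixes K :: "real \<Rightarrow> real"
  assumes cont: "isCont K x"
    and r: "\<And>e. 0 < e \<Longrightarrow> e < 1 \<Longrightarrow> K (x + e) \<le> 0"
    and l: "\<And>e. 0 < e \<Longrightarrow> e < 1 \<Longrightarrow> 0 \<le> K (x - e)"
  shows "K x = 0"
proof -
  have "(K \<longlongrightarrow> K x) (at x)" using cont by (simp add: isCont_def)
  then have L1: "((\<lambda>e. K (x + e)) \<longlongrightarrow> K x) (at 0)" by (rule LIM_offset_zero)
  have c2: "isCont (\<lambda>z. K (- z)) (- x)"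
    by (rule isCont_o2[where g=K]) (auto intro!: continuous_intros simp: cont)
  have "((\<lambda>z. K (- z)) \<longlongrightarrow> K (- (- x))) (at (- x))" using c2 by (simp add: isCont_def)
  then have "((\<lambda>e. K (- (- x + e))) \<longlongrightarrow> K (- (- x))) (at 0)" by (rule LIM_offset_zero)
  then have L2: "((\<lambda>e. K (x + - e)) \<longlongrightarrow> K x) (at 0)" by simp
  have R1: "((\<lambda>e. K (x + e)) \<longlongrightarrow> K x) (at_right 0)" using L1 filterlim_at_split by blast
  have R2: "((\<lambda>e. K (x + - e)) \<longlongrightarrow> K x) (at_right 0)" using L2 filterlim_at_split by blast
  have ev: "eventually (\<lambda>e. 0 < e \<and> e < (1::real)) (at_right 0)"
    unfolding eventually_at_right_field by (intro exI[of _ 1]) auto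
  have "K x \<le> 0"
    by (rule tendsto_upperbound[OF R1 eventually_mono[OF ev]]) (auto intro: r)
  moreover have "0 \<le> K x"
    by (rule tendsto_lowerbound[OF R2 eventually_mono[OF ev]]) (auto intro: l)
  ultimately show ?thesis by simp
qed


lemma norm_one_of_sq: "(norm (z::real^'n))^2 = 1 \<Longrightarrow> norm z = 1"
  using power2_eq_iff_nonneg[of "norm z" 1] by simp

lemma core:
  fixes T :: "'n::finite tensor3" and u y :: "real^'n" and \<rho> :: real
  assumes sym: "symmetric3 T" and nu: "norm u = 1" and fu: "tri T u u u = \<rho>" and rpos: "0 < \<rho>"
    and bnd: "\<And>z. norm z = 1 \<Longrightarrow> tri T z z z \<le> \<rho>"
    and sig: "\<And>v. inner u v = 0 \<Longrightarrow> norm v = 1 \<Longrightarrow> \<rho>/2 \<le> \<bar>tri T u v v\<bar>"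
    and ny: "norm y = 1" and fy: "tri T y y y = \<rho>" and cpos: "0 \<le> inner u y"
  shows "y = u"
proof -
  define c where "c = inner u y"
  define w where "w = y - c *\<^sub>R u"
  define s where "s = norm w"
  have uu: "inner u u = 1" using nu by (simp add: power2_norm_eq_inner[symmetric])
  have iuw: "inner u w = 0" unfolding w_def c_def by (simp add: inner_diff_right uu)
  have yeq: "y = c *\<^sub>R u + w" unfolding w_def by simp
  show ?thesis
  proof (cases "s = 0")
    case True
    then have "w = 0" unfolding s_def by simp
    then have yc: "y = c *\<^sub>R u" using yeq by simp
    then have ac: "\<bar>c\<bar> = 1" using ny nu by simp
    have c3: "c^3 * \<rho> = \<rho>" using fy fu yc tri_hom[of T c u] by simp
    have "c = 1"
    proof (cases "c \<ge> 0")
      case True then show ?thesis using ac by simp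
    next
      case False
      then have "c = -1" using ac by simp
      then show ?thesis using c3 rpos by simp
    qed
    then show ?thesis using yc by simp
  next
    case False
    then have spos: "0 < s" unfolding s_def by simp
    define v where "v = (1/s) *\<^sub>R w"
    have wv: "w = s *\<^sub>R v" unfolding v_def using spos by simp
    have nv: "norm v = 1" unfolding v_def using spos s_def by simp
    have uv: "inner u v = 0" unfolding v_def using iuw by simp
    have ycs: "y = c *\<^sub>R u + s *\<^sub>R v" using yeq wv by simp
    have cs1: "c^2 + s^2 = 1" using norm_comb_sq[OF nu nv uv, of c s] ny ycs by simp
    define d where "d = tri T u u v"
    define a where "a = tri T u v v"
    define b where "b = tri T v v v"
    have expd: "tri T (p *\<^sub>R u + q *\<^sub>R v) (p *\<^sub>R u + q *\<^sub>R v) (p *\<^sub>R u + q *\<^sub>R v)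
        = \<rho>*p^3 + 3*d*p^2*q + 3*a*p*q^2 + b*q^3" for p q
      using tri_expand[OF sym, of p u q v] fu unfolding d_def a_def b_def by (simp add: algebra_simps)
    have R: "\<rho>*p^3 + 3*d*p^2*q + 3*a*p*q^2 + b*q^3 \<le> \<rho>" if pq: "p^2 + q^2 = 1" for p q
    proof -
      have "norm (p *\<^sub>R u + q *\<^sub>R v) = 1"
        using norm_comb_sq[OF nu nv uv, of p q] pq by (intro norm_one_of_sq) simp
      then show ?thesis using bnd expd by metis
    qed
    have Ry: "\<rho>*c^3 + 3*d*c^2* s + 3*a*c* s^2 + b* s^3 = \<rho>" using expd[of c s] fy ycs by simp
    define G where "G = (\<lambda>t::real. 6*d*(1-t^2)^2 + 12*a*t*(1-t^2) + 8*b*t^2 - \<rho>*(6*t + 2*t^5))"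
    have tG: "t * G t \<le> 0" for t
    proof -
      have "\<rho>*((1-t^2)/(1+t^2))^3 + 3*d*((1-t^2)/(1+t^2))^2*(2*t/(1+t^2))
        + 3*a*((1-t^2)/(1+t^2))*(2*t/(1+t^2))^2 + b*(2*t/(1+t^2))^3 - \<rho> \<le> 0"
        using R[OF param_circle[of t]] by simp
      moreover have "0 \<le> (1+t^2)^3" by (simp add: add_nonneg_nonneg)
      ultimately have "(1+t^2)^3 * (\<rho>*((1-t^2)/(1+t^2))^3 + 3*d*((1-t^2)/(1+t^2))^2*(2*t/(1+t^2))
        + 3*a*((1-t^2)/(1+t^2))*(2*t/(1+t^2))^2 + b*(2*t/(1+t^2))^3 - \<rho>) \<le> 0"
        by (simp add: mult_nonneg_nonpos)
      then show ?thesis using param_ident[of t \<rho> d a b] unfolding G_def by simp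
    qed
    have "G 0 = 0"
    proof (rule zero_by_sides[where K=G and x=0])
      show "isCont G 0" unfolding G_def by (intro continuous_intros)
    next
      fix e :: real assume e: "0 < e" "e < 1"
      show "G (0 + e) \<le> 0" using tG[of e] e by (simp add: mult_le_0_iff)
    next
      fix e :: real assume e: "0 < e" "e < 1"
      show "0 \<le> G (0 - e)" using tG[of "-e"] e by (simp add: zero_le_mult_iff)
    qed
    then have d0: "d = 0" unfolding G_def by simp
    define Q where "Q = (\<lambda>t::real. 3*\<rho> - 6*a + 6*a*t^2 - 4*b*t + \<rho>*t^4)"
    have GQ: "G t = -2 * t * Q t" for t unfolding G_def Q_def d0 by algebra
    have Qnn: "0 \<le> Q t" if "t \<noteq> 0" for t
    proof (rule ccontr)
      assume "\<not> 0 \<le> Q t"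
      then have "0 < (-2*t^2) * Q t" using that by (intro mult_neg_neg) auto
      moreover have "t * G t = (-2*t^2) * Q t" using GQ[of t] by (simp add: power2_eq_square)
      ultimately show False using tG[of t] by simp
    qed
    define t0 where "t0 = s / (1 + c)"
    have c0: "0 \<le> c" using cpos c_def by simp
    have s2: "s^2 \<le> 1" using cs1 zero_le_power2[of c] by linarith
    have s1: "s \<le> 1" using power2_le_imp_le[of s 1] s2 by simp
    have t0pos: "0 < t0" unfolding t0_def using spos c0 by simp
    have t0le: "t0 \<le> 1" unfolding t0_def using s1 c0 by simp
    have e0: "t0^2 * (1+c)^2 = s^2" unfolding t0_def using c0 by (simp add: power_divide)
    also have "\<dots> = (1 - c) * (1 + c)" using cs1 by algebra
    finally have "(t0^2 * (1+c) - (1 - c)) * (1 + c) = 0" by algebra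
    then have e1: "t0^2 * (1+c) = 1 - c" using c0 by simp
    have D0: "0 < 1 + t0^2" by (simp add: add_pos_nonneg)
    have hp: "1 - t0^2 = c * (1 + t0^2)" using e1 by algebra
    have pt0: "(1 - t0^2)/(1+t0^2) = c" using hp D0 by simp
    have "(1 + c) * (s * (1 + t0^2)) = (1 + c) * (2 * t0)"
    proof -
      have "(1 + c) * (s * (1 + t0^2)) = s * (1 + c) + s * (t0^2 * (1 + c))" by algebra
      also have "\<dots> = 2 * s" using e1 by algebra
      also have "\<dots> = (1 + c) * (2 * t0)" unfolding t0_def using c0 by simp
      finally show ?thesis .
    qed
    then have "s * (1 + t0^2) = 2 * t0" using c0 by simp
    then have qt0: "2*t0/(1+t0^2) = s" using D0 by (simp add: field_simps)
    have "t0 * G t0 = 0" using param_ident[of t0 \<rho> d a b] Ry unfolding pt0 qt0 G_def by simp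
    then have "G t0 = 0" using t0pos by simp
    then have Qt0: "Q t0 = 0" using GQ[of t0] t0pos by simp
    define K where "K = (\<lambda>l::real. -3*\<rho> + 6*a + 6*a*t0^2*l + \<rho>*t0^4*l*(l^2+l+1))"
    have QK: "Q (l*t0) = (l - 1) * K l" for l
    proof -
      have "Q (l*t0) - l * Q t0 = (l - 1) * K l" unfolding Q_def K_def by algebra
      then show ?thesis using Qt0 by simp
    qed
    have "(\<lambda>l. - K l) 1 = 0"
    proof (rule zero_by_sides[where K="\<lambda>l. - K l" and x=1])
      show "isCont (\<lambda>l. - K l) 1" unfolding K_def by (intro continuous_intros)
    next
      fix e :: real assume e: "0 < e" "e < 1"
      have "0 \<le> Q ((1+e)*t0)" using e t0pos by (intro Qnn) simp
      then have "0 \<le> e * K (1+e)" using QK[of "1+e"] by simp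
      then show "- K (1 + e) \<le> 0" using e by (simp add: zero_le_mult_iff)
    next
      fix e :: real assume e: "0 < e" "e < 1"
      have "0 \<le> Q ((1-e)*t0)" using e t0pos by (intro Qnn) simp
      then have "0 \<le> (-e) * K (1-e)" using QK[of "1-e"] by simp
      then show "0 \<le> - K (1 - e)" using e by (simp add: mult_le_0_iff)
    qed
    then have K1: "K 1 = 0" by simp
    have "K 1 = -3*\<rho> + 6*a + 6*a*t0^2 + 3*\<rho>*t0^4" unfolding K_def by simp
    moreover have "3*(1+t0^2)*(2*a - \<rho>*(1-t0^2)) = -3*\<rho> + 6*a + 6*a*t0^2 + 3*\<rho>*t0^4" by algebra
    ultimately have "3*(1+t0^2)*(2*a - \<rho>*(1-t0^2)) = K 1" by simp
    then have "2*a - \<rho>*(1-t0^2) = 0" using K1 D0 by simp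
    then have key: "2*a = \<rho> - \<rho>*t0^2" by algebra
    have sa: "\<rho>/2 \<le> \<bar>a\<bar>" unfolding a_def by (rule sig[OF uv nv])
    have rt: "0 < \<rho>*t0^2" using rpos t0pos by simp
    have rt1: "\<rho>*t0^2 \<le> \<rho>" using rpos t0le t0pos
      by (simp add: mult_left_le power_le_one)
    show ?thesis
    proof (cases "0 \<le> a")
      case True then show ?thesis using sa key rt by simp
    next
      case False then show ?thesis using sa key rt1 rpos by simp
    qed
  qed
qed


lemma tri_axis: "tri T (axis m 1) (axis m 1) (axis m 1) = T m m m"
proof -
  have "tri T (axis m 1) (axis m 1) (axis m 1) = (\<Sum>i\<in>UNIV. \<Sum>j\<in>UNIV. \<Sum>k\<in>UNIV.
      if k = m then (if j = m then (if i = m then T m m m else 0) else 0) else 0)"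
    unfolding tri_def by (intro sum.cong refl) (simp add: axis_def)
  also have "\<dots> = T m m m" by simp
  finally show ?thesis .
qed

lemma triple_sum_zero:
  fixes D :: "'a::finite \<Rightarrow> 'a \<Rightarrow> 'a \<Rightarrow> real"
  assumes nn: "\<And>i j k. 0 \<le> D i j k" and le: "(\<Sum>i\<in>UNIV. \<Sum>j\<in>UNIV. \<Sum>k\<in>UNIV. D i j k) \<le> 0"
  shows "D i j k = 0"
proof -
  have n2: "0 \<le> (\<Sum>k\<in>UNIV. D i j k)" for i j using nn by (simp add: sum_nonneg)
  have n1: "0 \<le> (\<Sum>j\<in>UNIV. \<Sum>k\<in>UNIV. D i j k)" for i using n2 by (simp add: sum_nonneg)
  have "(\<Sum>i\<in>UNIV. \<Sum>j\<in>UNIV. \<Sum>k\<in>UNIV. D i j k) = 0" using le n1 by (simp add: sum_nonneg antisym)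
  then have "(\<Sum>j\<in>UNIV. \<Sum>k\<in>UNIV. D i j k) = 0" using n1 by (simp add: sum_nonneg_eq_0_iff)
  then have "(\<Sum>k\<in>UNIV. D i j k) = 0" using n2 by (simp add: sum_nonneg_eq_0_iff)
  then show ?thesis using nn by (simp add: sum_nonneg_eq_0_iff)
qed

lemma hom_bound:
  assumes bnd: "\<And>z. norm z = 1 \<Longrightarrow> tri T z z z \<le> \<rho>"
  shows "tri T x x x \<le> \<rho> * norm x ^ 3"
proof (cases "x = 0")
  case True then show ?thesis by (simp add: tri_def)
next
  case False
  define y where "y = (1 / norm x) *\<^sub>R x"
  have ny: "norm y = 1" unfolding y_def using False by simp
  have xy: "x = norm x *\<^sub>R y" unfolding y_def using False by simp
  have "tri T x x x = norm x ^ 3 * tri T y y y" by (subst xy, subst xy, subst xy) (rule tri_hom)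
  also have "\<dots> \<le> norm x ^ 3 * \<rho>" using bnd[OF ny] by (simp add: mult_left_mono)
  finally show ?thesis by (simp add: mult.commute)
qed

lemma tpow3_scale: "tpow3 (r *\<^sub>R x) i j k = r^3 * tpow3 x i j k"
  by (simp add: tpow3_def tprod3_def power3_eq_cube algebra_simps)

theorem mainTheorem11:
  fixes T :: "'n::finite tensor3" and u :: "real^'n" and \<rho> \<sigma>\<^sub>2 :: real
  assumes "symmetric3 T"
    and "\<forall>i j k. T i j k > 0"
    and "norm u = 1"
    and "tinner T (tpow3 u) = \<rho>"
    and "\<rho> = spectral_norm3 T"
    and "\<sigma>\<^sub>2 = Inf {\<bar>tinner T (sym_prod3 u v v)\<bar> | v. inner u v = 0 \<and> norm v = 1}"
    and "\<sigma>\<^sub>2 \<ge> \<rho> / 2"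
  shows "\<exists>!S. best_nonneg_sym_rank1 T S"
proof -
  note sym = assms(1) and Tpos = assms(2) and nu = assms(3)
  have fu: "tri T u u u = \<rho>" using assms(4) by (simp add: tinner_tpow3)
  have babs: "\<bar>tri T z z z\<bar> \<le> \<rho>" if "norm z = 1" for z
    using spectral_bound[OF that, of T] assms(5) by simp
  have bnd: "tri T z z z \<le> \<rho>" if "norm z = 1" for z using babs[OF that] by simp
  obtain m :: 'n where True by blast
  have "T m m m \<le> \<rho>" using bnd[of "axis m 1"] by (simp add: tri_axis)
  then have rpos: "0 < \<rho>" using Tpos by (meson less_le_trans)
  have sig: "\<rho>/2 \<le> \<bar>tri T u v v\<bar>" if "inner u v = 0" "norm v = 1" for v
  proof -
    let ?X = "{\<bar>tinner T (sym_prod3 u v v)\<bar> | v. inner u v = 0 \<and> norm v = 1}"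
    have "\<sigma>\<^sub>2 \<le> \<bar>tinner T (sym_prod3 u v v)\<bar>"
      unfolding assms(6)
      by (rule cInf_lower) (use that in \<open>auto intro!: bdd_belowI[where m=0]\<close>)
    then show ?thesis using assms(7) tinner_sym[OF sym] by simp
  qed
  define ua where "ua = (\<chi> i. \<bar>u$i\<bar>)"
  have nua: "norm ua = 1" using nu by (simp add: ua_def norm_vec_def)
  define D where "D = (\<lambda>i j k. T i j k * (\<bar>u$i\<bar> * \<bar>u$j\<bar> * \<bar>u$k\<bar>) - T i j k * (u$i * u$j * u$k))"
  have Dnn: "0 \<le> D i j k" for i j k
  proof -
    have "u$i * u$j * u$k \<le> \<bar>u$i\<bar> * \<bar>u$j\<bar> * \<bar>u$k\<bar>" by (metis abs_ge_self abs_mult)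
    then show ?thesis unfolding D_def using Tpos
      by (simp add: mult_left_mono less_imp_le)
  qed
  have "(\<Sum>i\<in>UNIV. \<Sum>j\<in>UNIV. \<Sum>k\<in>UNIV. D i j k) = tri T ua ua ua - tri T u u u"
    by (simp add: D_def tri_def ua_def sum_subtractf)
  also have "\<dots> \<le> 0" using bnd[OF nua] fu by simp
  finally have Dsum: "(\<Sum>i\<in>UNIV. \<Sum>j\<in>UNIV. \<Sum>k\<in>UNIV. D i j k) \<le> 0" .
  have D0: "D i j k = 0" for i j k by (rule triple_sum_zero[where D=D, OF Dnn Dsum])
  have "u \<noteq> 0" using nu by auto
  then obtain i0 where i0: "u$i0 \<noteq> 0" by (auto simp: vec_eq_iff)
  have unn: "0 \<le> u$k" for k
  proof -
    have "T i0 i0 k * (u$i0 * u$i0 * (\<bar>u$k\<bar> - u$k)) = 0"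
      using D0[of i0 i0 k] unfolding D_def by (simp add: algebra_simps abs_mult_self)
    moreover have "T i0 i0 k \<noteq> 0" using Tpos by (metis less_irrefl)
    ultimately have "\<bar>u$k\<bar> - u$k = 0" using i0 by simp
    then show ?thesis by (metis abs_ge_zero eq_iff_diff_eq_0)
  qed
  have nonu: "nonneg_vec u" using unn by (simp add: nonneg_vec_def)
  have E: "tnorm (\<lambda>i j k. T i j k - c * tpow3 x i j k) = sqrt (tinner T T - 2 * c * tri T x x x + c^2 * (norm x)^6)" for c x
    unfolding tnorm_def by (simp only: tinner_diff)
  have Elow: "tinner T T - \<rho>^2 + ((c * norm x ^ 3 - \<rho>)^2 + 2 * c * (\<rho> * norm x ^ 3 - tri T x x x))
      = tinner T T - 2 * c * tri T x x x + c^2 * (norm x)^6" for c x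
    by algebra
  have E0: "tinner T T - 2 * \<rho> * tri T u u u + \<rho>^2 * (norm u)^6 = tinner T T - \<rho>^2"
    using fu nu by (simp add: power2_eq_square)
  have tail_nn: "0 \<le> 2 * c * (\<rho> * norm x ^ 3 - tri T x x x)" if "0 \<le> c" for c x
    using hom_bound[OF bnd, of x] that by simp
  define S0 where "S0 = (\<lambda>i j k. \<rho> * tpow3 u i j k)"
  have best0: "best_nonneg_sym_rank1 T S0"
    unfolding best_nonneg_sym_rank1_def
  proof (intro conjI allI impI)
    show "\<exists>c x. c \<ge> 0 \<and> nonneg_vec x \<and> S0 = (\<lambda>i j k. c * tpow3 x i j k)"
      using rpos nonu unfolding S0_def by (intro exI[of _ \<rho>] exI[of _ u]) simp
    fix c' :: real and x' :: "real^'n" assume cx: "0 \<le> c' \<and> nonneg_vec x'"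
    have "tinner T T - \<rho>^2 \<le> tinner T T - 2 * c' * tri T x' x' x' + c'^2 * (norm x')^6"
      using Elow[of c' x'] tail_nn[of c' x'] cx zero_le_power2[of "c' * norm x' ^ 3 - \<rho>"] by linarith
    then show "tnorm (\<lambda>i j k. T i j k - S0 i j k) \<le> tnorm (\<lambda>i j k. T i j k - c' * tpow3 x' i j k)"
      unfolding S0_def E E0 by simp
  qed
  show ?thesis
  proof (rule ex1I[of _ S0])
    show "best_nonneg_sym_rank1 T S0" by (rule best0)
  next
    fix S assume bS: "best_nonneg_sym_rank1 T S"
    then obtain c x where cx: "c \<ge> 0" "nonneg_vec x" and Sd: "S = (\<lambda>i j k. c * tpow3 x i j k)"
      unfolding best_nonneg_sym_rank1_def by blast
    have "tnorm (\<lambda>i j k. T i j k - S i j k) \<le> tnorm (\<lambda>i j k. T i j k - \<rho> * tpow3 u i j k)"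
      using bS rpos nonu unfolding best_nonneg_sym_rank1_def by (meson less_imp_le)
    then have "tinner T T - 2 * c * tri T x x x + c^2 * (norm x)^6 \<le> tinner T T - \<rho>^2"
      unfolding Sd E E0 by simp
    then have sq0: "(c * norm x ^ 3 - \<rho>)^2 + 2 * c * (\<rho> * norm x ^ 3 - tri T x x x) \<le> 0"
      using Elow[of c x] by linarith
    have t1: "(c * norm x ^ 3 - \<rho>)^2 = 0" and t2: "2 * c * (\<rho> * norm x ^ 3 - tri T x x x) = 0"
      using sq0 tail_nn[OF cx(1), of x] zero_le_power2[of "c * norm x ^ 3 - \<rho>"] by linarith+
    have cn: "c * norm x ^ 3 = \<rho>" using t1 by simp
    then have cpos: "c \<noteq> 0" and xnz: "norm x \<noteq> 0" using rpos by auto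
    have fx: "tri T x x x = \<rho> * norm x ^ 3" using t2 cpos by simp
    define n where "n = norm x"
    have npos: "0 < n" using xnz n_def by simp
    define y where "y = (1 / n) *\<^sub>R x"
    have ny: "norm y = 1" unfolding y_def n_def using xnz by simp
    have xy: "x = n *\<^sub>R y" unfolding y_def using npos by simp
    have "tri T x x x = n ^ 3 * tri T y y y" by (subst xy, subst xy, subst xy) (rule tri_hom)
    then have "n^3 * tri T y y y = n^3 * \<rho>" using fx n_def by (metis mult.commute)
    then have fy: "tri T y y y = \<rho>" using npos by simp
    have ynn: "0 \<le> y$i" for i using cx(2) npos unfolding y_def nonneg_vec_def by simp
    have "0 \<le> inner u y" unfolding inner_vec_def using unn ynn by (simp add: sum_nonneg)
    then have "y = u" using core[OF sym nu fu rpos bnd sig ny fy] by blast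
    then have xu: "x = n *\<^sub>R u" using xy by simp
    show "S = S0" unfolding Sd S0_def xu tpow3_scale using cn n_def
      by (simp add: mult.assoc[symmetric])
  qed
qed

end
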